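(* Let $M_{\mathbf a}$ be a Brieskorn manifold of dimension $5$ or $7$ (i.e. $n=3$ or $n=4$) with all exponents $a_j\ge 2$, whose natural Sasakian structure is regular and positive. Then, up to reordering of the coordinates, (1) if $n=3$: $\mathbf a\in\{(2,2,2,2),(3,3,3,3),(4,4,4,2),(6,6,3,2)\}$; (2) if $n=4$: $\mathbf a\in\{(2,2,2,2,2),(3,3,3,3,3),(4,4,4,4,4),(4,4,4,4,2),(6,6,6,6,2),(6,6,6,3,2)\}$.
   Context: For a degree $d$, weight vector $\mathbf w=(w_0,\dots,w_n)\in(\mathbb Z^+)^{n+1}$ and exponents $a_i=d/w_i\in\mathbb Z^+$, the Brieskorn–Pham polynomial is $f_{\mathbf a}(\mathbf z)=z_0^{a_0}+\dots+z_n^{a_n}$ and the Brieskorn manifold is $M_{\mathbf a}=\{f_{\mathbf a}=0\}\cap S^{2n+1}\subset\mathbb C^{n+1}$, of dimension $2n-1$. It carries a natural Sasakian structure whose Reeb field generates the weighted circle action $\lambda\cdot\mathbf z=(\lambda^{w_0}z_0,\dots,\lambda^{w_n}z_n)$. This structure is regular if and only if the weights $w_j$ are pairwise relatively prime, and it is positive if and only if $|\mathbf w|-d>0$, where $|\mathbf w|=\sum_jw_j$. *)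

theory Defs
  imports Main "HOL-Library.Multiset"
begin

text \<open>Brieskorn--Pham data in n+1 variables: degree d, weights w, exponents a,
  all as lists of length n+1, with w_j positive and a_j = d / w_j, i.e. a_j * w_j = d.\<close>
definition bp_data :: "nat \<Rightarrow> nat \<Rightarrow> nat list \<Rightarrow> nat list \<Rightarrow> bool" where
  "bp_data n d w a \<longleftrightarrow> length w = n + 1 \<and> length a = n + 1 \<and>
     (\<forall>j < n + 1. 0 < w ! j \<and> a ! j * w ! j = d)"

definition sasaki_regular :: "nat list \<Rightarrow> bool" where
  "sasaki_regular w \<longleftrightarrow>
     (\<forall>i < length w. \<forall>j < length w. i \<noteq> j \<longrightarrow> coprime (w ! i) (w ! j))"

definition sasaki_positive :: "nat \<Rightarrow> nat list \<Rightarrow> bool" where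
  "sasaki_positive d w \<longleftrightarrow> int (sum_list w) - int d > 0"

end

theory Submission
  imports Defs
begin

lemma sum2: "(x::nat) \<ge> 1 \<Longrightarrow> y \<ge> 1 \<Longrightarrow> x + y \<le> x*y + 1"
proof -
  assume "x \<ge> 1" "y \<ge> 1"
  then obtain u v where "x = u+1" "y = v+1" by (metis add.commute le_Suc_ex)
  thus ?thesis by simp
qed

lemma sum4: "(a::nat) \<ge> 1 \<Longrightarrow> b \<ge> 1 \<Longrightarrow> c \<ge> 1 \<Longrightarrow> e \<ge> 1 \<Longrightarrow> a+b+c+e \<le> a*b*c*e + 3"
proof -
  assume h: "a \<ge> 1" "b \<ge> 1" "c \<ge> 1" "e \<ge> 1"
  have "a + b \<le> a*b+1" using h sum2 by auto
  moreover have "a*b + c \<le> a*b*c + 1" using h sum2[of "a*b" c] by auto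
  moreover have "a*b*c + e \<le> a*b*c*e + 1" using h sum2[of "a*b*c" e] by auto
  ultimately show ?thesis by linarith
qed

lemma sum3: "(a::nat) \<ge> 1 \<Longrightarrow> b \<ge> 1 \<Longrightarrow> c \<ge> 1 \<Longrightarrow> a+b+c \<le> a*b*c + 3"
proof -
  assume h: "a \<ge> 1" "b \<ge> 1" "c \<ge> 1"
  have "a + b \<le> a*b+1" using h sum2 by auto
  moreover have "a*b + c \<le> a*b*c + 1" using h sum2[of "a*b" c] by auto
  ultimately show ?thesis by linarith
qed

lemma wb: fixes x Q S d :: nat assumes "x*Q \<le> d" "d < x + S" "S \<le> Q + 3" "2*x \<le> d" "coprime x Q" "Q \<ge> 1"
  shows "x \<le> 3"
proof (rule ccontr)
  assume "\<not> x \<le> 3" hence x4: "x \<ge> 4" by simp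
  consider "Q = 1" | "Q = 2" | "Q \<ge> 3" using assms(6) by linarith
  then show False
  proof cases
    case 1 then show ?thesis using assms x4 by linarith
  next
    case 2 then have "x = 4" using assms x4 by linarith
    then show ?thesis using assms 2 by simp
  next
    case 3
    obtain u v where uv: "x = u + 4" "Q = v + 3" using x4 3 by (metis add.commute le_Suc_ex)
    have "x*Q < x + Q + 3" using assms by linarith
    then show ?thesis unfolding uv by (simp add: algebra_simps)
  qed
qed

lemma w123: "(x::nat) \<ge> 1 \<Longrightarrow> x \<le> 3 \<Longrightarrow> x = 1 \<or> x = 2 \<or> x = 3" by arith

lemma count_le1:
  assumes "sasaki_regular w" "(x::nat) > 1" shows "count (mset w) x \<le> 1"
proof (rule ccontr)
  assume nt: "\<not> count (mset w) x \<le> 1"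
  have "count (mset w) x = length (filter ((=) x) w)"
    by (metis length_replicate replicate_count_mset_eq_filter_eq)
  also have "\<dots> = card {i. i < length w \<and> x = w ! i}" by (rule length_filter_conv_card)
  finally have c: "2 \<le> card {i. i < length w \<and> x = w ! i}" using nt by simp
  define A where "A = {i. i < length w \<and> x = w ! i}"
  have fA: "finite A" unfolding A_def by simp
  have cA: "2 \<le> card A" using c A_def by simp
  then have "A \<noteq> {}" by auto
  then obtain i where i: "i \<in> A" by blast
  have e: "card (A - {i}) = card A - 1" using i fA by simp
  have "card (A - {i}) \<ge> 1" using cA e by linarith
  then have "A - {i} \<noteq> {}" by (intro notI) simp
  then obtain j where j: "j \<in> A" "j \<noteq> i" by blast
  have "i < length w" "j < length w" "w!i = x" "w!j = x" using i j unfolding A_def by auto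
  then have "coprime x x" using assms(1) j(2) unfolding sasaki_regular_def by metis
  thus False using assms(2) by simp
qed


lemma mset_eq3:
  assumes "set_mset (W::nat multiset) \<subseteq> {1,2,3}"
  shows "W = replicate_mset (count W 1) 1 + replicate_mset (count W 2) 2 + replicate_mset (count W 3) 3"
proof (rule multiset_eqI)
  fix x
  show "count W x = count (replicate_mset (count W 1) 1 + replicate_mset (count W 2) 2 + replicate_mset (count W 3) 3) x"
  proof (cases "x \<in> {1,2,3}")
    case True then show ?thesis by auto
  next
    case False then have "x \<notin># W" using assms by auto
    then show ?thesis using False by (auto simp: count_eq_zero_iff)
  qed
qed

lemma dc9: "(d::nat) = 0 \<or> d = 1 \<or> d = 2 \<or> d = 3 \<or> d = 4 \<or> d = 5 \<or> d = 6 \<or> d = 7 \<or> d = 8 \<or> d > 8" by arith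

lemma rep_num: "replicate_mset (numeral k) x = add_mset x (replicate_mset (pred_numeral k) x)"
  by (simp add: numeral_eq_Suc)

lemma mem_of_eq: "X = A \<Longrightarrow> A \<in> S \<Longrightarrow> X \<in> S" by simp

lemma final:
  fixes W :: "nat multiset" and d n :: nat
  assumes "size W = n+1" "n = 3 \<or> n = 4" "set_mset W \<subseteq> {1,2,3}" "count W 2 \<le> 1" "count W 3 \<le> 1"
    "d < sum_mset W" "prod_mset W dvd d" "\<forall>x\<in>#W. 2*x \<le> d"
  shows "(n = 3 \<longrightarrow> image_mset (\<lambda>x. d div x) W \<in> {mset [2,2,2,2], mset [3,3,3,3], mset [4,4,4,2], mset [6,6,3,2]})
       \<and> (n = 4 \<longrightarrow> image_mset (\<lambda>x. d div x) W \<in> {mset [2,2,2,2,2], mset [3,3,3,3,3], mset [4,4,4,4,4],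
                                mset [4,4,4,4,2], mset [6,6,6,6,2], mset [6,6,6,3,2]})"
proof -
  define c1 where "c1 = count W 1"
  define c2 where "c2 = count W 2"
  define c3 where "c3 = count W 3"
  have We: "W = replicate_mset c1 1 + replicate_mset c2 2 + replicate_mset c3 3"
    using mset_eq3[OF assms(3)] c1_def c2_def c3_def by simp
  have sz: "c1 + c2 + c3 = n + 1" using assms(1) We by simp
  have c2: "c2 = 0 \<or> c2 = 1" and c3: "c3 = 0 \<or> c3 = 1" using assms(4,5) c2_def c3_def by auto
  have h: "d < sum_mset W" "prod_mset W dvd d" "\<forall>x\<in>#W. 2*x \<le> d" using assms by auto
  consider "n = 3" "c2 = 0" "c3 = 0" | "n = 3" "c2 = 1" "c3 = 0" | "n = 3" "c2 = 0" "c3 = 1" | "n = 3" "c2 = 1" "c3 = 1"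
    | "n = 4" "c2 = 0" "c3 = 0" | "n = 4" "c2 = 1" "c3 = 0" | "n = 4" "c2 = 0" "c3 = 1" | "n = 4" "c2 = 1" "c3 = 1"
    using assms(2) c2 c3 by blast
  note cs = this
  have n34: "(3::nat) \<noteq> 4" by simp
  show ?thesis using cs
  proof cases
    case 1
    then have Wc: "W = {#1,1,1,1#}" using We sz by (simp add: rep_num)
    then have "d = 2 \<or> d = 3" using h by auto
    then show ?thesis
    proof (elim disjE)
      assume dv: "d = 2"
      have eq: "image_mset ((div) d) W = mset [2,2,2,2]" using Wc dv by simp
      have m: "image_mset ((div) d) W \<in> {mset [2,2,2,2], mset [3,3,3,3], mset [4,4,4,2], mset [6,6,3,2]}" by (rule mem_of_eq[OF eq]) blast
      show ?thesis using 1 m by (intro conjI impI; (assumption | linarith))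
    next
      assume dv: "d = 3"
      have eq: "image_mset ((div) d) W = mset [3,3,3,3]" using Wc dv by simp
      have m: "image_mset ((div) d) W \<in> {mset [2,2,2,2], mset [3,3,3,3], mset [4,4,4,2], mset [6,6,3,2]}" by (rule mem_of_eq[OF eq]) blast
      show ?thesis using 1 m by (intro conjI impI; (assumption | linarith))
    qed
  next
    case 2
    then have Wc: "W = {#1,1,1,2#}" using We sz by (simp add: rep_num)
    then have dd: "d = 4" using h by auto
    have eq: "image_mset ((div) d) W = mset [4,4,4,2]" using Wc dd by (simp add: add_mset_commute)
    have m: "image_mset ((div) d) W \<in> {mset [2,2,2,2], mset [3,3,3,3], mset [4,4,4,2], mset [6,6,3,2]}" by (rule mem_of_eq[OF eq]) blast
    show ?thesis using 2 m by (intro conjI impI; (assumption | linarith))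
  next
    case 3
    then have Wc: "W = {#1,1,1,3#}" using We sz by (simp add: rep_num)
    then have False using h by auto
    then show ?thesis ..
  next
    case 4
    then have Wc: "W = {#1,1,2,3#}" using We sz by (simp add: rep_num)
    then have dd: "d = 6" using h by auto
    have eq: "image_mset ((div) d) W = mset [6,6,3,2]" using Wc dd by (simp add: add_mset_commute)
    have m: "image_mset ((div) d) W \<in> {mset [2,2,2,2], mset [3,3,3,3], mset [4,4,4,2], mset [6,6,3,2]}" by (rule mem_of_eq[OF eq]) blast
    show ?thesis using 4 m by (intro conjI impI; (assumption | linarith))
  next
    case 5
    then have Wc: "W = {#1,1,1,1,1#}" using We sz by (simp add: rep_num)
    then have "d = 2 \<or> d = 3 \<or> d = 4" using h by auto
    then show ?thesis
    proof (elim disjE)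
      assume dv: "d = 2"
      have eq: "image_mset ((div) d) W = mset [2,2,2,2,2]" using Wc dv by simp
      have m: "image_mset ((div) d) W \<in> {mset [2,2,2,2,2], mset [3,3,3,3,3], mset [4,4,4,4,4], mset [4,4,4,4,2], mset [6,6,6,6,2], mset [6,6,6,3,2]}" by (rule mem_of_eq[OF eq]) blast
      show ?thesis using 5 m by (intro conjI impI; (assumption | linarith))
    next
      assume dv: "d = 3"
      have eq: "image_mset ((div) d) W = mset [3,3,3,3,3]" using Wc dv by simp
      have m: "image_mset ((div) d) W \<in> {mset [2,2,2,2,2], mset [3,3,3,3,3], mset [4,4,4,4,4], mset [4,4,4,4,2], mset [6,6,6,6,2], mset [6,6,6,3,2]}" by (rule mem_of_eq[OF eq]) blast
      show ?thesis using 5 m by (intro conjI impI; (assumption | linarith))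
    next
      assume dv: "d = 4"
      have eq: "image_mset ((div) d) W = mset [4,4,4,4,4]" using Wc dv by simp
      have m: "image_mset ((div) d) W \<in> {mset [2,2,2,2,2], mset [3,3,3,3,3], mset [4,4,4,4,4], mset [4,4,4,4,2], mset [6,6,6,6,2], mset [6,6,6,3,2]}" by (rule mem_of_eq[OF eq]) blast
      show ?thesis using 5 m by (intro conjI impI; (assumption | linarith))
    qed
  next
    case 6
    then have Wc: "W = {#1,1,1,1,2#}" using We sz by (simp add: rep_num)
    then have dd: "d = 4" using h by auto
    have eq: "image_mset ((div) d) W = mset [4,4,4,4,2]" using Wc dd by (simp add: add_mset_commute)
    have m: "image_mset ((div) d) W \<in> {mset [2,2,2,2,2], mset [3,3,3,3,3], mset [4,4,4,4,4], mset [4,4,4,4,2], mset [6,6,6,6,2], mset [6,6,6,3,2]}" by (rule mem_of_eq[OF eq]) blast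
    show ?thesis using 6 m by (intro conjI impI; (assumption | linarith))
  next
    case 7
    then have Wc: "W = {#1,1,1,1,3#}" using We sz by (simp add: rep_num)
    then have dd: "d = 6" using h by auto
    have eq: "image_mset ((div) d) W = mset [6,6,6,6,2]" using Wc dd by (simp add: add_mset_commute)
    have m: "image_mset ((div) d) W \<in> {mset [2,2,2,2,2], mset [3,3,3,3,3], mset [4,4,4,4,4], mset [4,4,4,4,2], mset [6,6,6,6,2], mset [6,6,6,3,2]}" by (rule mem_of_eq[OF eq]) blast
    show ?thesis using 7 m by (intro conjI impI; (assumption | linarith))
  next
    case 8
    then have Wc: "W = {#1,1,1,2,3#}" using We sz by (simp add: rep_num)
    then have dd: "d = 6" using h by auto
    have eq: "image_mset ((div) d) W = mset [6,6,6,3,2]" using Wc dd by (simp add: add_mset_commute)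
    have m: "image_mset ((div) d) W \<in> {mset [2,2,2,2,2], mset [3,3,3,3,3], mset [4,4,4,4,4], mset [4,4,4,4,2], mset [6,6,6,6,2], mset [6,6,6,3,2]}" by (rule mem_of_eq[OF eq]) blast
    show ?thesis using 8 m by (intro conjI impI; (assumption | linarith))
  qed
qed

lemma dvd_cop: "coprime (x::nat) y \<Longrightarrow> x dvd d \<Longrightarrow> y dvd d \<Longrightarrow> x * y dvd d"
  by (simp add: divides_mult)

lemma len4: "length (xs::nat list) = 4 \<Longrightarrow> xs = [xs!0, xs!1, xs!2, xs!3]"
  by (cases xs; simp; rename_tac l; case_tac l; simp; rename_tac l; case_tac l; simp;
      rename_tac l; case_tac l; simp)

lemma len5: "length (xs::nat list) = 5 \<Longrightarrow> xs = [xs!0, xs!1, xs!2, xs!3, xs!4]"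
  by (cases xs; simp; rename_tac l; case_tac l; simp; rename_tac l; case_tac l; simp;
      rename_tac l; case_tac l; simp; rename_tac l; case_tac l; simp)

lemma bound4:
  fixes x p q r s d :: nat
  assumes "x*(p*q*r*s) dvd d" "d > 0" "d < x+p+q+r+s" "2*x \<le> d"
    "coprime x p" "coprime x q" "coprime x r" "coprime x s" "p \<ge> 1" "q \<ge> 1" "r \<ge> 1" "s \<ge> 1"
  shows "x \<le> 3"
proof (rule wb[of x "p*q*r*s" d "p+q+r+s"])
  show "x*(p*q*r*s) \<le> d" using assms(1,2) by (simp add: dvd_imp_le)
  show "p+q+r+s \<le> p*q*r*s + 3" using sum4 assms by auto
  show "coprime x (p*q*r*s)" using assms by simp
  show "1 \<le> p*q*r*s" using assms by simp
qed (use assms in auto)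

lemma bound3:
  fixes x p q r d :: nat
  assumes "x*(p*q*r) dvd d" "d > 0" "d < x+p+q+r" "2*x \<le> d"
    "coprime x p" "coprime x q" "coprime x r" "p \<ge> 1" "q \<ge> 1" "r \<ge> 1"
  shows "x \<le> 3"
proof (rule wb[of x "p*q*r" d "p+q+r"])
  show "x*(p*q*r) \<le> d" using assms(1,2) by (simp add: dvd_imp_le)
  show "p+q+r \<le> p*q*r + 3" using sum3 assms by auto
  show "coprime x (p*q*r)" using assms by simp
  show "1 \<le> p*q*r" using assms by simp
qed (use assms in auto)

theorem proposition3p13:
  fixes n d :: nat and w a :: "nat list"
  assumes "n = 3 \<or> n = 4"
    and "bp_data n d w a"
    and "\<forall>j < n + 1. a ! j \<ge> 2"
    and "sasaki_regular w"
    and "sasaki_positive d w"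
  shows "(n = 3 \<longrightarrow> mset a \<in> {mset [2,2,2,2], mset [3,3,3,3], mset [4,4,4,2], mset [6,6,3,2]})
       \<and> (n = 4 \<longrightarrow> mset a \<in> {mset [2,2,2,2,2], mset [3,3,3,3,3], mset [4,4,4,4,4],
                                mset [4,4,4,4,2], mset [6,6,6,6,2], mset [6,6,6,3,2]})"
proof -
  have len: "length w = n+1" "length a = n+1" and wa: "\<forall>j<n+1. 0 < w!j \<and> a!j * w!j = d"
    using assms(2) unfolding bp_data_def by auto
  have cop: "\<And>i j. i < n+1 \<Longrightarrow> j < n+1 \<Longrightarrow> i \<noteq> j \<Longrightarrow> coprime (w!i) (w!j)"
    using assms(4) len unfolding sasaki_regular_def by auto
  have pos: "d < sum_list w" using assms(5) unfolding sasaki_positive_def by simp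
  have ge2: "\<And>j. j < n+1 \<Longrightarrow> 2 \<le> a!j" using assms(3) by auto
  have adiv: "\<And>j. j < n+1 \<Longrightarrow> a!j = d div w!j" using wa by (metis nonzero_mult_div_cancel_right not_gr0)
  have dwj: "\<And>j. j < n+1 \<Longrightarrow> w!j dvd d" using wa by (metis dvd_triv_right)
  have twoj: "\<And>j. j < n+1 \<Longrightarrow> 2 * w!j \<le> d"
    using wa ge2 by (metis mult_le_mono1)
  have wpos: "\<And>j. j < n+1 \<Longrightarrow> 1 \<le> w!j" using wa by (simp add: Suc_leI)
  have dpos: "d > 0" using twoj[of 0] wpos[of 0] by linarith
  show ?thesis
  proof (cases "n = 3")
    case True
    define w0 where "w0 = w!0"
    define w1 where "w1 = w!1"
    define w2 where "w2 = w!2"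
    define w3 where "w3 = w!3"
    note wd = w0_def w1_def w2_def w3_def
    have weq: "w = [w0,w1,w2,w3]" using len4[of w] len True wd by simp
    have aeq: "a = [d div w0, d div w1, d div w2, d div w3]"
      using len4[of a] len True adiv wd by simp
    have c: "coprime w0 w1" "coprime w0 w2" "coprime w0 w3" "coprime w1 w2" "coprime w1 w3"
      "coprime w2 w3" using cop True wd by auto
    have cs: "coprime w1 w0" "coprime w2 w0" "coprime w3 w0" "coprime w2 w1" "coprime w3 w1"
      "coprime w3 w2" using c by (simp_all add: ac_simps)
    have dv: "w0 dvd d" "w1 dvd d" "w2 dvd d" "w3 dvd d" using dwj True wd by auto
    have P: "w0*w1*w2*w3 dvd d"
    proof -
      have "w2*w3 dvd d" using dvd_cop c dv by blast
      hence "w1*(w2*w3) dvd d" using dvd_cop c dv by simp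
      hence "w0*(w1*(w2*w3)) dvd d" using dvd_cop c dv by simp
      thus ?thesis by (simp add: ac_simps)
    qed
    have tw: "2*w0 \<le> d" "2*w1 \<le> d" "2*w2 \<le> d" "2*w3 \<le> d" using twoj True wd by auto
    have wp: "1 \<le> w0" "1 \<le> w1" "1 \<le> w2" "1 \<le> w3" using wpos True wd by auto
    have sm: "d < w0+w1+w2+w3" using pos weq by simp
    have b0: "w0 \<le> 3" by (rule bound3[of w0 w1 w2 w3 d]) (use P dpos sm tw c cs wp in \<open>simp_all add: ac_simps\<close>)
    have b1: "w1 \<le> 3" by (rule bound3[of w1 w0 w2 w3 d]) (use P dpos sm tw c cs wp in \<open>simp_all add: ac_simps\<close>)
    have b2: "w2 \<le> 3" by (rule bound3[of w2 w0 w1 w3 d]) (use P dpos sm tw c cs wp in \<open>simp_all add: ac_simps\<close>)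
    have b3: "w3 \<le> 3" by (rule bound3[of w3 w0 w1 w2 d]) (use P dpos sm tw c cs wp in \<open>simp_all add: ac_simps\<close>)
    have ma: "mset a = image_mset (\<lambda>x. d div x) (mset w)" using aeq weq by simp
    show ?thesis unfolding ma
    proof (rule final)
      show "size (mset w) = n + 1" using len by simp
      show "n = 3 \<or> n = 4" using assms(1) .
      show "set_mset (mset w) \<subseteq> {1,2,3}" using weq wp b0 b1 b2 b3 by auto
      show "count (mset w) 2 \<le> 1" by (rule count_le1[OF assms(4)]) simp
      show "count (mset w) 3 \<le> 1" by (rule count_le1[OF assms(4)]) simp
      show "d < sum_mset (mset w)" using pos by (simp add: sum_mset_sum_list)
      show "prod_mset (mset w) dvd d" using P weq by (simp add: mult.assoc)
      show "\<forall>x\<in>#mset w. 2*x \<le> d" using weq tw by auto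
    qed
  next
    case False
    then have T: "n = 4" using assms(1) by simp
    define w0 where "w0 = w!0"
    define w1 where "w1 = w!1"
    define w2 where "w2 = w!2"
    define w3 where "w3 = w!3"
    define w4 where "w4 = w!4"
    note wd = w0_def w1_def w2_def w3_def w4_def
    have weq: "w = [w0,w1,w2,w3,w4]" using len5[of w] len T wd by simp
    have aeq: "a = [d div w0, d div w1, d div w2, d div w3, d div w4]"
      using len5[of a] len T adiv wd by simp
    have c: "coprime w0 w1" "coprime w0 w2" "coprime w0 w3" "coprime w0 w4" "coprime w1 w2" "coprime w1 w3"
      "coprime w1 w4" "coprime w2 w3" "coprime w2 w4" "coprime w3 w4" using cop T wd by auto
    have cs: "coprime w1 w0" "coprime w2 w0" "coprime w3 w0" "coprime w4 w0" "coprime w2 w1" "coprime w3 w1"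
      "coprime w4 w1" "coprime w3 w2" "coprime w4 w2" "coprime w4 w3" using c by (simp_all add: ac_simps)
    have dv: "w0 dvd d" "w1 dvd d" "w2 dvd d" "w3 dvd d" "w4 dvd d" using dwj T wd by auto
    have P: "w0*w1*w2*w3*w4 dvd d"
    proof -
      have "w3*w4 dvd d" using dvd_cop c dv by blast
      hence "w2*(w3*w4) dvd d" using dvd_cop c dv by simp
      hence "w1*(w2*(w3*w4)) dvd d" using dvd_cop c dv by simp
      hence "w0*(w1*(w2*(w3*w4))) dvd d" using dvd_cop c dv by simp
      thus ?thesis by (simp add: ac_simps)
    qed
    have tw: "2*w0 \<le> d" "2*w1 \<le> d" "2*w2 \<le> d" "2*w3 \<le> d" "2*w4 \<le> d" using twoj T wd by auto
    have wp: "1 \<le> w0" "1 \<le> w1" "1 \<le> w2" "1 \<le> w3" "1 \<le> w4" using wpos T wd by auto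
    have sm: "d < w0+w1+w2+w3+w4" using pos weq by simp
    have b0: "w0 \<le> 3" by (rule bound4[of w0 w1 w2 w3 w4 d]) (use P dpos sm tw c cs wp in \<open>simp_all add: ac_simps\<close>)
    have b1: "w1 \<le> 3" by (rule bound4[of w1 w0 w2 w3 w4 d]) (use P dpos sm tw c cs wp in \<open>simp_all add: ac_simps\<close>)
    have b2: "w2 \<le> 3" by (rule bound4[of w2 w0 w1 w3 w4 d]) (use P dpos sm tw c cs wp in \<open>simp_all add: ac_simps\<close>)
    have b3: "w3 \<le> 3" by (rule bound4[of w3 w0 w1 w2 w4 d]) (use P dpos sm tw c cs wp in \<open>simp_all add: ac_simps\<close>)
    have b4: "w4 \<le> 3" by (rule bound4[of w4 w0 w1 w2 w3 d]) (use P dpos sm tw c cs wp in \<open>simp_all add: ac_simps\<close>)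
    have ma: "mset a = image_mset (\<lambda>x. d div x) (mset w)" using aeq weq by simp
    show ?thesis unfolding ma
    proof (rule final)
      show "size (mset w) = n + 1" using len by simp
      show "n = 3 \<or> n = 4" using assms(1) .
      show "set_mset (mset w) \<subseteq> {1,2,3}" using weq wp b0 b1 b2 b3 b4 by auto
      show "count (mset w) 2 \<le> 1" by (rule count_le1[OF assms(4)]) simp
      show "count (mset w) 3 \<le> 1" by (rule count_le1[OF assms(4)]) simp
      show "d < sum_mset (mset w)" using pos by (simp add: sum_mset_sum_list)
      show "prod_mset (mset w) dvd d" using P weq by (simp add: mult.assoc)
      show "\<forall>x\<in>#mset w. 2*x \<le> d" using weq tw by auto
    qed
  qed
qed

end
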